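(* Let $P$ and $Q$ be tabloids of the same shape $\lambda$ with $\lambda_i=\lambda_{i+1}$. Then the dominance constant satisfies \[ r_{i+1}(P,Q)=\operatorname{lch}_i(P)-\operatorname{lch}_i(Q).\]
   Context: Fix $n\ge1$; $\overline i=i+n\mathbb Z$, $[\overline n]=\{\overline1,\dots,\overline n\}$. A tabloid of shape $\lambda$ ($\lambda$ a partition) is a sequence of pairwise disjoint subsets $T_1,T_2,\dots,T_{\ell(\lambda)}$ (rows) of $[\overline n]$ with $|T_r|=\lambda_r$. Broken order: $\overline1<\overline2<\dots<\overline n$. Local charge: suppose rows $k$ and $k+1$ of a tabloid $T$ both have size $m$. List the elements of $T_k$ as $\overline{a_1}<\dots<\overline{a_m}$ in broken order. For $t=1,\dots,m$ in turn, match $\overline{a_t}$ with the smallest (in broken order) not yet matched element of $T_{k+1}$ that is larger than $\overline{a_t}$, if one exists, and otherwise with the smallest not yet matched element of $T_{k+1}$. Then $\operatorname{lch}_k(T)$ is the number of $t$ such that $\overline{a_t}$ is larger (in broken order) than the element it is matched with. Streams: cells are pairs $(i,j)\in\mathbb Z^2$ (row $i$, increasing southward; column $j$, increasing eastward); $(i,j)$ is northwest of $(i',j')$ if $i\le i'$, $j\le j'$; north means smaller row index, west smaller column index. For $A,B\subseteq[\overline n]$ with $|A|=|B|=m\ge1$ and $r\in\mathbb Z$, enumerate $\bigcup A=\{\dots<a_0<a_1<a_2<\dots\}\subseteq\mathbb Z$ with $1\le a_1<\dots<a_m\le n$ and $a_{t+m}=a_t+n$, and similarly $\bigcup B=\{b_t\}$;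 define the stream $\Sigma_r(A,B)=\{(b_t,a_{t+r}):t\in\mathbb Z\}$ (rows from $B$, columns from $A$; $r$ is its altitude). A proper numbering of a stream is an indexing of its cells by $\mathbb Z$, $X^{(t)}$, with $X^{(t+1)}$ southeast of $X^{(t)}$ for all $t$. If $S,T$ are streams with the same $m$, no cell of $S$ sharing a row or column with a cell of $T$, and $S$ is properly numbered, the backward numbering of $T$ with respect to $S$ is the unique proper numbering of $T$ such that $S^{(t)}$ is northwest of $T^{(t)}$ for all $t$ and $S^{(j+1)}$ is not northwest of $T^{(j)}$ for some $j$. Then $T$ is concurrent to $S$ if, with this numbering, there exist $t,j$ with $T^{(t)}$ strictly north of $S^{(t+1)}$ and $T^{(j)}$ strictly west of $S^{(j+1)}$. For tabloids $P,Q$ of shape $\lambda$ with $\lambda_i=\lambda_{i+1}$, the dominance constant $r_{i+1}(P,Q)$ is the unique integer $r$ such that $\Sigma_r(P_{i+1},Q_{i+1})$ is concurrent to $\Sigma_0(P_i,Q_i)$ (such $r$ exists and is unique). *)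

theory Defs
  imports Main
begin

text \<open>Residues in [n-bar] are represented by their representatives 1..n (ints);
  the broken order 1 < 2 < ... < n is then the usual order on these representatives.
  Rows and parts are indexed from 1.\<close>

definition is_partition :: "nat list \<Rightarrow> bool" where
  "is_partition lam \<longleftrightarrow> sorted (rev lam) \<and> (\<forall>x\<in>set lam. 0 < x)"

definition part :: "nat list \<Rightarrow> nat \<Rightarrow> nat" where
  "part lam k = lam ! (k - 1)"

definition row :: "int set list \<Rightarrow> nat \<Rightarrow> int set" where
  "row T k = T ! (k - 1)"

definition tabloid :: "int \<Rightarrow> nat list \<Rightarrow> int set list \<Rightarrow> bool" where
  "tabloid n lam T \<longleftrightarrow> length T = length lam
     \<and> (\<forall>k\<in>{1..length lam}. row T k \<subseteq> {1..n} \<and> card (row T k) = part lam k)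
     \<and> (\<forall>k\<in>{1..length lam}. \<forall>l\<in>{1..length lam}. k \<noteq> l \<longrightarrow> row T k \<inter> row T l = {})"

fun lch_aux :: "int list \<Rightarrow> int set \<Rightarrow> nat" where
  "lch_aux [] U = 0"
| "lch_aux (a # as) U =
     (let b = (if {b\<in>U. a < b} \<noteq> {} then Min {b\<in>U. a < b} else Min U)
      in (if b < a then 1 else 0) + lch_aux as (U - {b}))"

definition lch :: "int set list \<Rightarrow> nat \<Rightarrow> nat" where
  "lch T k = lch_aux (sorted_list_of_set (row T k)) (row T (k + 1))"

text \<open>Enumeration of the union of residue classes: a_1 < ... < a_m are the elements
  of A in 1..n, and a_(t+m) = a_t + n.\<close>

definition enum :: "int \<Rightarrow> int set \<Rightarrow> int \<Rightarrow> int" where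
  "enum n A t = (let s = sorted_list_of_set A; m = int (card A)
                 in s ! nat ((t - 1) mod m) + n * ((t - 1) div m))"

text \<open>Stream Sigma_r(A,B) = {(b_t, a_(t+r))}: rows from B, columns from A.\<close>

definition stream :: "int \<Rightarrow> int \<Rightarrow> int set \<Rightarrow> int set \<Rightarrow> (int \<times> int) set" where
  "stream n r A B = {(enum n B t, enum n A (t + r)) | t. True}"

definition canon_numbering :: "int \<Rightarrow> int \<Rightarrow> int set \<Rightarrow> int set \<Rightarrow> int \<Rightarrow> int \<times> int" where
  "canon_numbering n r A B t = (enum n B t, enum n A (t + r))"

definition nw :: "int \<times> int \<Rightarrow> int \<times> int \<Rightarrow> bool" where
  "nw c d \<longleftrightarrow> fst c \<le> fst d \<and> snd c \<le> snd d"

definition proper_numbering :: "(int \<times> int) set \<Rightarrow> (int \<Rightarrow> int \<times> int) \<Rightarrow> bool" where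
  "proper_numbering S X \<longleftrightarrow> bij_betw X UNIV S \<and> (\<forall>t. nw (X t) (X (t + 1)))"

definition backward_numbering ::
  "(int \<times> int) set \<Rightarrow> (int \<Rightarrow> int \<times> int) \<Rightarrow> int \<Rightarrow> int \<times> int" where
  "backward_numbering T XS = (THE Y. proper_numbering T Y \<and> (\<forall>t. nw (XS t) (Y t))
                                  \<and> (\<exists>j. \<not> nw (XS (j + 1)) (Y j)))"

definition concurrent :: "(int \<times> int) set \<Rightarrow> (int \<times> int) set \<Rightarrow> (int \<Rightarrow> int \<times> int) \<Rightarrow> bool" where
  "concurrent T S XS \<longleftrightarrow>
     proper_numbering S XS
     \<and> (\<forall>c\<in>S. \<forall>d\<in>T. fst c \<noteq> fst d \<and> snd c \<noteq> snd d)
     \<and> (let Y = backward_numbering T XS in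
          (\<exists>t j. fst (Y t) < fst (XS (t + 1)) \<and> snd (Y j) < snd (XS (j + 1))))"

text \<open>Dominance constant r_(i+1)(P,Q); Sigma_0(P_i,Q_i) carries its natural numbering
  t \<mapsto> (b_t, a_t).\<close>

definition dom_const :: "int \<Rightarrow> int set list \<Rightarrow> int set list \<Rightarrow> nat \<Rightarrow> int" where
  "dom_const n P Q i = (THE r. concurrent (stream n r (row P (i + 1)) (row Q (i + 1)))
                                         (stream n 0 (row P i) (row Q i))
                                         (canon_numbering n 0 (row P i) (row Q i)))"

end

theory Submission
  imports Defs
begin


lemma L:
  "sorted_wrt (<) xs \<Longrightarrow> finite U \<Longrightarrow> set xs \<inter> U = {} \<Longrightarrow> length xs \<le> card U \<Longrightarrow>
   (int (lch_aux xs U) \<le> u \<longleftrightarrow> 0 \<le> u \<and> (\<forall>a\<in>set xs. int (card {x\<in>set xs. a \<le> x}) - int (card {y\<in>U. a < y}) \<le> u))"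
proof (induction xs arbitrary: U u)
  case Nil
  then show ?case by simp
next
  case (Cons a as)
  have srt: "sorted_wrt (<) as" and alt: "\<forall>x\<in>set as. a < x" using Cons.prems(1) by auto
  have dis: "set as \<inter> U = {}" "a \<notin> U" using Cons.prems(3) by auto
  have cnt_a: "card {x\<in>set (a#as). a \<le> x} = Suc (length as)"
  proof -
    have "{x\<in>set (a#as). a \<le> x} = set (a#as)" using alt by auto
    moreover have "distinct (a#as)" using Cons.prems(1) strict_sorted_iff by blast
    ultimately show ?thesis by (simp add: distinct_card)
  qed
  have cnt_b: "\<And>b. b \<in> set as \<Longrightarrow> {x\<in>set (a#as). b \<le> x} = {x\<in>set as. b \<le> x}"
    using alt by auto
  have cnt_le: "\<And>b. card {x\<in>set as. b \<le> x} \<le> length as"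
    by (metis (no_types, lifting) List.finite_set card_length card_mono mem_Collect_eq order_trans subsetI)
  show ?case
  proof (cases "{b\<in>U. a < b} \<noteq> {}")
    case True
    define b where "b = Min {b\<in>U. a < b}"
    have bU: "b \<in> U" "a < b" and bmin: "\<And>y. y \<in> U \<Longrightarrow> a < y \<Longrightarrow> b \<le> y"
      using True Cons.prems(2) unfolding b_def
      by (auto intro: Min_le) (use Min_in[of "{b\<in>U. a < b}"] in auto)
    have eq: "lch_aux (a#as) U = lch_aux as (U - {b})"
      using True bU unfolding b_def by (simp add: Let_def)
    have IH: "int (lch_aux as (U - {b})) \<le> u \<longleftrightarrow> 0 \<le> u \<and> (\<forall>x\<in>set as. int (card {y\<in>set as. x \<le> y}) - int (card {y\<in>U - {b}. x < y}) \<le> u)"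
      apply (rule Cons.IH)
      using srt Cons.prems bU by (auto simp: card_Diff_singleton)
    have Ub: "\<And>x. x \<in> set as \<Longrightarrow> card {y\<in>U - {b}. x < y} = (if x < b then card {y\<in>U. x < y} - 1 else card {y\<in>U. x < y})"
    proof -
      fix x assume "x \<in> set as"
      have "{y\<in>U - {b}. x < y} = {y\<in>U. x < y} - {b}" by auto
      then show "?thesis x" using bU Cons.prems(2) dis \<open>x \<in> set as\<close>
        by (auto simp: card_Diff_singleton_if)
    qed
    have Ua: "\<And>x. x \<in> set as \<Longrightarrow> x < b \<Longrightarrow> {y\<in>U. x < y} = {y\<in>U. a < y}"
    proof (intro set_eqI iffI)
      fix x y assume x: "x \<in> set as" "x < b"
      { assume "y \<in> {y\<in>U. x < y}" then show "y \<in> {y\<in>U. a < y}" using alt x by auto }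
      { assume y: "y \<in> {y\<in>U. a < y}"
        then have "b \<le> y" using bmin by auto
        moreover have "y \<noteq> b \<or> True" by simp
        ultimately show "y \<in> {y\<in>U. x < y}" using x y by auto }
    qed
    have pos: "\<And>x. x \<in> set as \<Longrightarrow> x < b \<Longrightarrow> card {y\<in>U. x < y} \<ge> 1"
      using bU Ua Cons.prems(2)
      by (metis (mono_tags, lifting) One_nat_def Suc_leI card_gt_0_iff empty_iff mem_Collect_eq rev_finite_subset subsetI)
    show ?thesis
    proof
      assume H: "int (lch_aux (a # as) U) \<le> u"
      then have H2: "0 \<le> u" "\<forall>x\<in>set as. int (card {y\<in>set as. x \<le> y}) - int (card {y\<in>U - {b}. x < y}) \<le> u"
        using IH eq by auto
      have T1: "\<forall>x\<in>set as. int (card {y\<in>set (a#as). x \<le> y}) - int (card {y\<in>U. x < y}) \<le> u"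
      proof
        fix x assume x: "x \<in> set as"
        show "int (card {y\<in>set (a#as). x \<le> y}) - int (card {y\<in>U. x < y}) \<le> u"
          using H2(2) x cnt_b[OF x] Ub[OF x] pos[OF x] by (auto split: if_splits)
      qed
      have T2: "int (card {y\<in>set (a#as). a \<le> y}) - int (card {y\<in>U. a < y}) \<le> u"
      proof (cases as)
        case Nil
        have "card {y\<in>U. a < y} \<ge> 1" using True Cons.prems(2)
          by (simp add: Suc_leI card_gt_0_iff)
        then show ?thesis using cnt_a Nil H2(1) by simp
      next
        case (Cons a1 as1)
        have a1: "a1 \<in> set as" using Cons by simp
        have a1min: "\<And>x. x \<in> set as \<Longrightarrow> a1 \<le> x" using srt Cons by auto
        have ca1: "card {y\<in>set as. a1 \<le> y} = length as"
        proof -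
          have "{y\<in>set as. a1 \<le> y} = set as" using a1min by auto
          moreover have "distinct as" using srt strict_sorted_iff by blast
          ultimately show ?thesis by (simp add: distinct_card)
        qed
        show ?thesis
        proof (cases "a1 < b")
          case True
          then show ?thesis using H2(2) a1 Ub[OF a1] Ua[OF a1] ca1 cnt_a pos[OF a1] by force
        next
          case False
          have "{y\<in>U. a1 < y} \<union> {b} \<subseteq> {y\<in>U. a < y}" using bU alt a1 by auto
          moreover have "b \<notin> {y\<in>U. a1 < y}" using False by auto
          ultimately have "card {y\<in>U. a1 < y} + 1 \<le> card {y\<in>U. a < y}"
            using Cons.prems(2)
            by (metis (no_types, lifting) Suc_eq_plus1 card_insert_disjoint card_mono finite_subset insert_is_Un sup_commute mem_Collect_eq subsetI)
          then show ?thesis using H2(2) a1 Ub[OF a1] ca1 cnt_a False by force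
        qed
      qed
      show "0 \<le> u \<and> (\<forall>x\<in>set (a # as). int (card {y\<in>set (a # as). x \<le> y}) - int (card {y\<in>U. x < y}) \<le> u)"
        using H2(1) T1 T2 by auto
    next
      assume H: "0 \<le> u \<and> (\<forall>x\<in>set (a # as). int (card {y\<in>set (a # as). x \<le> y}) - int (card {y\<in>U. x < y}) \<le> u)"
      have "\<forall>x\<in>set as. int (card {y\<in>set as. x \<le> y}) - int (card {y\<in>U - {b}. x < y}) \<le> u"
      proof
        fix x assume x: "x \<in> set as"
        show "int (card {y\<in>set as. x \<le> y}) - int (card {y\<in>U - {b}. x < y}) \<le> u"
        proof (cases "x < b")
          case True
          have "int (card {y\<in>set as. x \<le> y}) - int (card {y\<in>U - {b}. x < y})
              \<le> int (card {y\<in>set (a#as). a \<le> y}) - int (card {y\<in>U. a < y})"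
            using Ub[OF x] Ua[OF x True] pos[OF x True] cnt_a cnt_le[of x] True by auto
          then show ?thesis using H by auto
        next
          case False
          then show ?thesis using H x Ub[OF x] cnt_b[OF x] by auto
        qed
      qed
      then show "int (lch_aux (a # as) U) \<le> u" using IH eq H by auto
    qed
  next
    case False
    have Une: "U \<noteq> {}" using Cons.prems(4) by auto
    define b where "b = Min U"
    have bU: "b \<in> U" using Une Cons.prems(2) unfolding b_def by auto
    have allbelow: "\<And>y. y \<in> U \<Longrightarrow> y < a" using False dis by (metis (mono_tags, lifting) empty_iff linorder_neqE mem_Collect_eq)
    have ba: "b < a" using allbelow bU by auto
    have eq: "lch_aux (a#as) U = 1 + lch_aux as (U - {b})"
      using False ba unfolding b_def by (simp add: Let_def)
    have IH: "int (lch_aux as (U - {b})) \<le> u - 1 \<longleftrightarrow> 0 \<le> u - 1 \<and> (\<forall>x\<in>set as. int (card {y\<in>set as. x \<le> y}) - int (card {y\<in>U - {b}. x < y}) \<le> u - 1)"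
      apply (rule Cons.IH)
      using srt Cons.prems bU by (auto simp: card_Diff_singleton)
    have z1: "\<And>x. x \<in> set as \<Longrightarrow> {y\<in>U - {b}. x < y} = {}" using allbelow alt by force
    have z2: "\<And>x. x \<in> set (a#as) \<Longrightarrow> {y\<in>U. x < y} = {}" using allbelow alt by force
    have mx: "as \<noteq> [] \<Longrightarrow> \<exists>x\<in>set as. card {y\<in>set as. x \<le> y} = length as"
    proof -
      assume "as \<noteq> []"
      then obtain a1 as1 where c: "as = a1 # as1" by (cases as) auto
      have "{y\<in>set as. a1 \<le> y} = set as" using srt c by auto
      moreover have "distinct as" using srt strict_sorted_iff by blast
      ultimately show ?thesis using c by (auto simp: distinct_card)
    qed
    have R1: "(0 \<le> u \<and> (\<forall>x\<in>set (a # as). int (card {y\<in>set (a # as). x \<le> y}) - int (card {y\<in>U. x < y}) \<le> u))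
         \<longleftrightarrow> int (length as) + 1 \<le> u"
    proof -
      have "\<forall>x\<in>set (a # as). int (card {y\<in>set (a # as). x \<le> y}) - int (card {y\<in>U. x < y})
            = int (card {y\<in>set (a # as). x \<le> y})" using z2 by (metis card.empty diff_zero of_nat_0)
      moreover have "\<forall>x\<in>set as. card {y\<in>set (a # as). x \<le> y} \<le> length as"
        using cnt_b cnt_le by simp
      ultimately show ?thesis using cnt_a by force
    qed
    have R2: "(0 \<le> u - 1 \<and> (\<forall>x\<in>set as. int (card {y\<in>set as. x \<le> y}) - int (card {y\<in>U - {b}. x < y}) \<le> u - 1))
         \<longleftrightarrow> int (length as) + 1 \<le> u"
    proof (cases "as = []")
      case True then show ?thesis by (simp add: int_one_le_iff_zero_less)
    next
      case False
      then obtain x0 where x0: "x0 \<in> set as" "card {y\<in>set as. x0 \<le> y} = length as" using mx by blast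
      have "\<forall>x\<in>set as. int (card {y\<in>set as. x \<le> y}) - int (card {y\<in>U - {b}. x < y})
            = int (card {y\<in>set as. x \<le> y})" using z1 by (metis card.empty diff_zero of_nat_0)
      then have "(\<forall>x\<in>set as. int (card {y\<in>set as. x \<le> y}) - int (card {y\<in>U - {b}. x < y}) \<le> u - 1)
            \<longleftrightarrow> (\<forall>x\<in>set as. int (card {y\<in>set as. x \<le> y}) \<le> u - 1)" by auto
      also have "\<dots> \<longleftrightarrow> int (length as) \<le> u - 1"
      proof
        assume "\<forall>x\<in>set as. int (card {y\<in>set as. x \<le> y}) \<le> u - 1"
        then show "int (length as) \<le> u - 1" using x0 by force
      next
        assume "int (length as) \<le> u - 1"
        show "\<forall>x\<in>set as. int (card {y\<in>set as. x \<le> y}) \<le> u - 1"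
        proof
          fix x assume "x \<in> set as"
          have "int (card {y\<in>set as. x \<le> y}) \<le> int (length as)" using cnt_le[of x] by simp
          then show "int (card {y\<in>set as. x \<le> y}) \<le> u - 1" using \<open>int (length as) \<le> u - 1\<close> by linarith
        qed
      qed
      finally show ?thesis by linarith
    qed
    show ?thesis using IH eq R1 R2 by linarith
  qed
qed


lemma enum_shift:
  assumes "X \<noteq> {}" "finite X"
  shows "enum n X (t + q * int (card X)) = enum n X t + q * n"
proof -
  have m: "int (card X) > 0" using assms by auto
  have e: "(t + q * int (card X) - 1) = (t - 1) + q * int (card X)" by simp
  have "(t + q * int (card X) - 1) mod int (card X) = (t - 1) mod int (card X)"
    unfolding e by simp
  moreover have "(t + q * int (card X) - 1) div int (card X) = (t - 1) div int (card X) + q"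
    unfolding e using m by simp
  ultimately show ?thesis unfolding enum_def Let_def
    by (simp add: algebra_simps)
qed

lemma enum_idx:
  assumes "1 \<le> t" "t \<le> int (card X)"
  shows "enum n X t = sorted_list_of_set X ! nat (t - 1)"
  using assms unfolding enum_def Let_def by simp

lemma enum_decomp:
  assumes "X \<noteq> {}" "finite X"
  shows "enum n X t = enum n X ((t - 1) mod int (card X) + 1) + ((t - 1) div int (card X)) * n"
proof -
  have "t = ((t - 1) mod int (card X) + 1) + ((t - 1) div int (card X)) * int (card X)"
    using div_mult_mod_eq[of "t - 1" "int (card X)"] by linarith
  then show ?thesis using enum_shift[OF assms, where t="(t - 1) mod int (card X) + 1" and q="(t - 1) div int (card X)" and n=n]
    by simp
qed

lemma enum_base:
  assumes "X \<noteq> {}" "finite X"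
  shows "1 \<le> (t - 1) mod int (card X) + 1" "(t - 1) mod int (card X) + 1 \<le> int (card X)"
proof -
  have m: "int (card X) > 0" using assms by auto
  show "1 \<le> (t - 1) mod int (card X) + 1" using m by simp
  show "(t - 1) mod int (card X) + 1 \<le> int (card X)" using m
    by (metis add.commute pos_mod_bound zless_imp_add1_zle)
qed

lemma sorted_in_range:
  fixes X :: "int set" and n :: int
  assumes "X \<subseteq> {1..n}" "k < card X"
  shows "sorted_list_of_set X ! k \<in> X"
proof -
  have "finite X" using assms(1) finite_subset by blast
  have "sorted_list_of_set X ! k \<in> set (sorted_list_of_set X)"
    using assms(2) by (intro nth_mem) simp
  then show ?thesis using \<open>finite X\<close> by simp
qed

lemma enum_step:
  assumes "X \<subseteq> {1..n}" "X \<noteq> {}"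
  shows "enum n X t < enum n X (t + 1)"
proof -
  have fin: "finite X" using assms(1) finite_subset by blast
  let ?s = "sorted_list_of_set X" and ?m = "int (card X)"
  have base: "enum n X t0 < enum n X (t0 + 1)" if t0: "1 \<le> t0" "t0 \<le> ?m" for t0
  proof (cases "t0 < ?m")
    case True
    have "enum n X t0 = ?s ! nat (t0 - 1)" using enum_idx t0 by blast
    moreover have "enum n X (t0 + 1) = ?s ! nat t0" using enum_idx[of "t0+1" X n] t0 True by simp
    moreover have "?s ! nat (t0 - 1) < ?s ! nat t0"
      using sorted_wrt_nth_less[OF strict_sorted_list_of_set[of X], of "nat (t0 - 1)" "nat t0"] True t0
      by simp
    ultimately show ?thesis by simp
  next
    case False
    then have e: "t0 = ?m" using t0 by simp
    have "enum n X (t0 + 1) = enum n X 1 + n" using enum_shift[OF assms(2) fin, where t=1 and q=1 and n=n] e by (simp add: add.commute)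
    moreover have "enum n X 1 = ?s ! 0" using enum_idx[of 1 X n] fin assms(2) by (simp add: Suc_leI card_gt_0_iff)
    moreover have "enum n X t0 = ?s ! nat (t0 - 1)" using enum_idx t0 by blast
    moreover have "?s ! 0 \<in> X" using sorted_in_range[OF assms(1)] fin assms(2) by (simp add: card_gt_0_iff)
    moreover have "?s ! nat (t0 - 1) \<in> X" using sorted_in_range[OF assms(1), of "nat (t0 - 1)"] t0 by simp
    ultimately show ?thesis using assms(1)
      by (smt (verit, best) atLeastAtMost_iff subsetD)
  qed
  define t0 where "t0 = (t - 1) mod ?m + 1"
  define q where "q = (t - 1) div ?m"
  have d: "t = t0 + q * ?m" unfolding t0_def q_def
    using div_mult_mod_eq[of "t - 1" ?m] by linarith
  have d1: "t + 1 = (t0 + 1) + q * ?m" using d by simp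
  have "enum n X t = enum n X t0 + q * n" by (subst d, rule enum_shift[OF assms(2) fin])
  moreover have "enum n X (t + 1) = enum n X (t0 + 1) + q * n"
    by (subst d1, rule enum_shift[OF assms(2) fin])
  moreover have t01: "1 \<le> t0" "t0 \<le> ?m" unfolding t0_def by (rule enum_base[OF assms(2) fin])+
  moreover have "enum n X t0 < enum n X (t0 + 1)" using t01 by (rule base)
  ultimately show ?thesis by linarith
qed

lemma int_step_mono:
  fixes f :: "int \<Rightarrow> 'a::linorder"
  assumes "\<And>t. f t < f (t + 1)" "t < t'"
  shows "f t < f t'"
proof -
  have "\<And>d::nat. f t < f (t + int d + 1)"
  proof -
    fix d :: nat show "f t < f (t + int d + 1)"
    proof (induction d)
      case 0 then show ?case using assms(1) by simp
    next
      case (Suc d)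
      then show ?case using assms(1)[of "t + int d + 1"] by (simp add: algebra_simps)
    qed
  qed
  from this[of "nat (t' - t - 1)"] show ?thesis using assms(2) by simp
qed

lemma enum_mono:
  assumes "X \<subseteq> {1..n}" "X \<noteq> {}"
  shows "enum n X t < enum n X t' \<longleftrightarrow> t < t'"
proof
  assume "enum n X t < enum n X t'"
  then show "t < t'"
    using int_step_mono[of "enum n X" t' t, OF enum_step[OF assms]] by (cases "t' < t"; cases "t = t'"; simp)
next
  assume "t < t'"
  then show "enum n X t < enum n X t'" using int_step_mono[of "enum n X" t t', OF enum_step[OF assms]] by simp
qed



lemma count_sorted:
  fixes X :: "int set"
  assumes "finite X" "k < card X"
  shows "card {y\<in>X. y < sorted_list_of_set X ! k} = k"
proof -
  let ?s = "sorted_list_of_set X"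
  have st: "sorted_wrt (<) ?s" by (rule strict_sorted_list_of_set)
  have len: "length ?s = card X" by simp
  have "{y\<in>X. y < ?s ! k} = set (take k ?s)"
  proof (intro set_eqI iffI)
    fix y assume "y \<in> {y\<in>X. y < ?s ! k}"
    then have y: "y \<in> set ?s" "y < ?s ! k" using assms by auto
    then obtain j where j: "j < length ?s" "y = ?s ! j" by (auto simp: in_set_conv_nth)
    have "j < k"
    proof (rule ccontr)
      assume "\<not> j < k"
      then have "?s ! k \<le> ?s ! j"
        using sorted_wrt_nth_less[OF st, of k j] j by (cases "k = j") auto
      then show False using y j by simp
    qed
    then show "y \<in> set (take k ?s)" using j by (auto simp: in_set_conv_nth)
  next
    fix y assume "y \<in> set (take k ?s)"
    then obtain j where j: "j < k" "y = ?s ! j" using assms len by (auto simp: in_set_conv_nth)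
    then have "y < ?s ! k" using sorted_wrt_nth_less[OF st, of j k] assms len by simp
    moreover have "y \<in> X" using j assms len
      by (metis less_trans nth_mem set_sorted_list_of_set)
    ultimately show "y \<in> {y\<in>X. y < ?s ! k}" by simp
  qed
  moreover have "distinct (take k ?s)" by simp
  ultimately show ?thesis using assms len by (simp add: distinct_card)
qed

lemma enum_disj:
  assumes "X \<subseteq> {1..n}" "X \<noteq> {}" "Y \<subseteq> {1..n}" "Y \<noteq> {}" "X \<inter> Y = {}"
  shows "enum n X t \<noteq> enum n Y k"
proof
  assume eq: "enum n X t = enum n Y k"
  have fX: "finite X" by (rule finite_subset[OF assms(1)]) simp
  have fY: "finite Y" by (rule finite_subset[OF assms(3)]) simp
  obtain x q where x: "x \<in> X" "enum n X t = x + q * n"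
  proof -
    have "sorted_list_of_set X ! nat ((t - 1) mod int (card X)) \<in> X"
      apply (rule sorted_in_range[OF assms(1)])
      using fX assms(2) by (simp add: card_gt_0_iff nat_less_iff)
    then show ?thesis using that[of _ "(t - 1) div int (card X)"] unfolding enum_def Let_def by (simp add: algebra_simps)
  qed
  obtain y r where y: "y \<in> Y" "enum n Y k = y + r * n"
  proof -
    have "sorted_list_of_set Y ! nat ((k - 1) mod int (card Y)) \<in> Y"
      apply (rule sorted_in_range[OF assms(3)])
      using fY assms(4) by (simp add: card_gt_0_iff nat_less_iff)
    then show ?thesis using that[of _ "(k - 1) div int (card Y)"] unfolding enum_def Let_def by (simp add: algebra_simps)
  qed
  have xr: "1 \<le> x" "x \<le> n" "1 \<le> y" "y \<le> n" using x y assms by auto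
  have "x \<noteq> y" using x y assms(5) by auto
  have e: "x + q * n = y + r * n" using eq x y by simp
  show False
  proof (cases q r rule: linorder_cases)
    case less
    then have "(q + 1) * n \<le> r * n" using xr by (intro mult_right_mono) auto
    then have "q * n + n \<le> r * n" by (simp add: algebra_simps)
    then show ?thesis using e xr by linarith
  next
    case equal then show ?thesis using e \<open>x \<noteq> y\<close> by simp
  next
    case greater
    then have "(r + 1) * n \<le> q * n" using xr by (intro mult_right_mono) auto
    then have "r * n + n \<le> q * n" by (simp add: algebra_simps)
    then show ?thesis using e xr by linarith
  qed
qed



lemma enum_count:
  assumes X: "X \<subseteq> {1..n}" "X \<noteq> {}" and x: "1 \<le> x" "x \<le> n" "x \<notin> X"
  shows "enum n X (int (card {y\<in>X. y < x})) < x \<and> x < enum n X (int (card {y\<in>X. y < x}) + 1)"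
proof -
  have fin: "finite X" by (rule finite_subset[OF X(1)]) simp
  let ?s = "sorted_list_of_set X" and ?m = "card X"
  define N where "N = card {y\<in>X. y < x}"
  have m0: "0 < ?m" using fin X(2) by (simp add: card_gt_0_iff)
  have Nm: "N \<le> ?m" unfolding N_def using fin by (intro card_mono) auto
  have inX: "\<And>k. k < ?m \<Longrightarrow> ?s ! k \<in> X" using sorted_in_range[OF X(1)] by blast
  have A: "enum n X (int N) < x"
  proof (cases "N = 0")
    case True
    have "enum n X (int ?m + (-1) * int ?m) = enum n X (int ?m) + (-1) * n" by (rule enum_shift[OF X(2) fin])
    then have e0: "enum n X 0 = enum n X (int ?m) - n" by simp
    have "enum n X (int ?m) = ?s ! nat (int ?m - 1)" using m0 by (intro enum_idx) auto
    moreover have "?s ! nat (int ?m - 1) \<in> X" using inX m0 by (simp add: nat_diff_distrib)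
    ultimately have "enum n X (int ?m) \<le> n" using X(1) by auto
    then show ?thesis using True e0 x by simp
  next
    case False
    have "enum n X (int N) = ?s ! nat (int N - 1)" using False Nm by (intro enum_idx) auto
    moreover have "nat (int N - 1) = N - 1" by (cases N) auto
    ultimately have e: "enum n X (int N) = ?s ! (N - 1)" by simp
    have c: "card {y\<in>X. y < ?s ! (N - 1)} = N - 1" using count_sorted[OF fin, of "N - 1"] False Nm by simp
    show ?thesis
    proof (rule ccontr)
      assume "\<not> enum n X (int N) < x"
      then have "x \<le> ?s ! (N - 1)" using e by simp
      then have "{y\<in>X. y < x} \<subseteq> {y\<in>X. y < ?s ! (N - 1)}" by auto
      then have "N \<le> card {y\<in>X. y < ?s ! (N - 1)}"
        unfolding N_def using fin by (intro card_mono) auto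
      then have "N \<le> N - 1" using c by simp
      then show False using False by simp
    qed
  qed
  have B: "x < enum n X (int N + 1)"
  proof (cases "N < ?m")
    case True
    have "enum n X (int N + 1) = ?s ! nat (int N + 1 - 1)" using True by (intro enum_idx) auto
    then have e: "enum n X (int N + 1) = ?s ! N" by simp
    have c: "card {y\<in>X. y < ?s ! N} = N" using count_sorted[OF fin True] .
    have sX: "?s ! N \<in> X" using inX True by simp
    show ?thesis
    proof (rule ccontr)
      assume "\<not> x < enum n X (int N + 1)"
      then have "?s ! N \<le> x" using e by simp
      moreover have "?s ! N \<noteq> x" using sX x(3) by auto
      ultimately have "?s ! N < x" by simp
      then have "insert (?s ! N) {y\<in>X. y < ?s ! N} \<subseteq> {y\<in>X. y < x}" using sX by auto
      then have "card (insert (?s ! N) {y\<in>X. y < ?s ! N}) \<le> N" unfolding N_def using fin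
        by (intro card_mono) auto
      then show False using c fin by simp
    qed
  next
    case False
    then have eN: "N = ?m" using Nm by simp
    have "enum n X (1 + 1 * int ?m) = enum n X 1 + 1 * n" by (rule enum_shift[OF X(2) fin])
    then have e1: "enum n X (int N + 1) = enum n X 1 + n" using eN by (simp add: add.commute)
    have "enum n X 1 = ?s ! nat (1 - 1)" using m0 by (intro enum_idx) auto
    moreover have "?s ! 0 \<in> X" using inX m0 by simp
    ultimately have "1 \<le> enum n X 1" using X(1) by auto
    then show ?thesis using e1 x by simp
  qed
  show ?thesis using A B unfolding N_def by simp
qed

lemma enum_less_iff:
  assumes X: "X \<subseteq> {1..n}" "X \<noteq> {}" and x: "1 \<le> x" "x \<le> n" "x \<notin> X"
  shows "x < enum n X k \<longleftrightarrow> int (card {y\<in>X. y < x}) + 1 \<le> k"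
proof -
  define N where "N = int (card {y\<in>X. y < x})"
  have c: "enum n X N < x" "x < enum n X (N + 1)" using enum_count[OF assms] unfolding N_def by auto
  have mono: "\<And>a b. a \<le> b \<Longrightarrow> enum n X a \<le> enum n X b"
  proof -
    fix a b :: int assume "a \<le> b"
    then show "enum n X a \<le> enum n X b"
    proof (cases "a = b")
      case False
      then have "a < b" using \<open>a \<le> b\<close> by simp
      then show ?thesis using enum_mono[OF X, of a b] by simp
    qed simp
  qed
  show ?thesis unfolding N_def[symmetric]
  proof
    assume a: "x < enum n X k"
    show "N + 1 \<le> k"
    proof (rule ccontr)
      assume "\<not> N + 1 \<le> k"
      then have "enum n X k \<le> enum n X N" by (intro mono) simp
      then show False using a c by simp
    qed
  next
    assume "N + 1 \<le> k"
    then have "enum n X (N + 1) \<le> enum n X k" by (rule mono)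
    then show "x < enum n X k" using c by simp
  qed
qed



lemma K1:
  assumes X: "X \<subseteq> {1..n}" "X \<noteq> {}" and X': "X' \<subseteq> {1..n}" "X' \<noteq> {}"
    and dis: "X \<inter> X' = {}" and cd: "card X' = card X"
  shows "(\<forall>t. enum n X t < enum n X' (t + u)) \<longleftrightarrow>
         (\<forall>a\<in>X. int (card {y\<in>X'. y < a}) - int (card {y\<in>X. y < a}) \<le> u)"
proof -
  have fin: "finite X" by (rule finite_subset[OF X(1)]) simp
  have fin': "finite X'" by (rule finite_subset[OF X'(1)]) simp
  let ?s = "sorted_list_of_set X" and ?m = "card X"
  have m0: "0 < ?m" using fin X(2) by (simp add: card_gt_0_iff)
  have key: "enum n X t0 < enum n X' (t0 + u) \<longleftrightarrow>
      int (card {y\<in>X'. y < ?s ! nat (t0 - 1)}) - int (card {y\<in>X. y < ?s ! nat (t0 - 1)}) \<le> u"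
    if t0: "1 \<le> t0" "t0 \<le> int ?m" for t0
  proof -
    have e: "enum n X t0 = ?s ! nat (t0 - 1)" using t0 by (rule enum_idx)
    have aX: "?s ! nat (t0 - 1) \<in> X" using sorted_in_range[OF X(1)] t0 by simp
    have a1: "1 \<le> ?s ! nat (t0 - 1)" "?s ! nat (t0 - 1) \<le> n" using aX X(1) by auto
    have an: "?s ! nat (t0 - 1) \<notin> X'" using aX dis by auto
    have c: "card {y\<in>X. y < ?s ! nat (t0 - 1)} = nat (t0 - 1)" using count_sorted[OF fin] t0 by simp
    show ?thesis unfolding e using enum_less_iff[OF X' a1 an, of "t0 + u"] c t0 by (simp, arith)
  qed
  show ?thesis
  proof
    assume H: "\<forall>t. enum n X t < enum n X' (t + u)"
    show "\<forall>a\<in>X. int (card {y\<in>X'. y < a}) - int (card {y\<in>X. y < a}) \<le> u"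
    proof
      fix a assume "a \<in> X"
      then obtain j where j: "j < ?m" "a = ?s ! j" using fin by (metis in_set_conv_nth length_sorted_list_of_set set_sorted_list_of_set)
      have "enum n X (int j + 1) < enum n X' (int j + 1 + u)" using H by simp
      then show "int (card {y\<in>X'. y < a}) - int (card {y\<in>X. y < a}) \<le> u"
        using key[of "int j + 1"] j by simp
    qed
  next
    assume H: "\<forall>a\<in>X. int (card {y\<in>X'. y < a}) - int (card {y\<in>X. y < a}) \<le> u"
    show "\<forall>t. enum n X t < enum n X' (t + u)"
    proof
      fix t
      define t0 where "t0 = (t - 1) mod int ?m + 1"
      define q where "q = (t - 1) div int ?m"
      have d: "t = t0 + q * int ?m" unfolding t0_def q_def
        using div_mult_mod_eq[of "t - 1" "int ?m"] by linarith
      have d1: "t + u = (t0 + u) + q * int (card X')" using d cd by simp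
      have t01: "1 \<le> t0" "t0 \<le> int ?m" unfolding t0_def by (rule enum_base[OF X(2) fin])+
      have "enum n X t = enum n X t0 + q * n" by (subst d, rule enum_shift[OF X(2) fin])
      moreover have "enum n X' (t + u) = enum n X' (t0 + u) + q * n"
        by (subst d1, rule enum_shift[OF X'(2) fin'])
      moreover have "?s ! nat (t0 - 1) \<in> X" using sorted_in_range[OF X(1)] t01 by simp
      then have "enum n X t0 < enum n X' (t0 + u)" using key[OF t01] H by blast
      ultimately show "enum n X t < enum n X' (t + u)" by simp
    qed
  qed
qed

lemma cardsplit:
  fixes Z :: "int set"
  assumes "finite Z"
  shows "int (card {y\<in>Z. a \<le> y}) = int (card Z) - int (card {y\<in>Z. y < a})"
    "a \<notin> Z \<Longrightarrow> int (card {y\<in>Z. a < y}) = int (card Z) - int (card {y\<in>Z. y < a})"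
proof -
  have "Z = {y\<in>Z. a \<le> y} \<union> {y\<in>Z. y < a}" by auto
  moreover have "{y\<in>Z. a \<le> y} \<inter> {y\<in>Z. y < a} = {}" by auto
  ultimately have "card Z = card {y\<in>Z. a \<le> y} + card {y\<in>Z. y < a}"
    using assms by (metis (no_types, lifting) card_Un_disjoint finite_Un)
  then show "int (card {y\<in>Z. a \<le> y}) = int (card Z) - int (card {y\<in>Z. y < a})" by simp
  assume "a \<notin> Z"
  then have "{y\<in>Z. a \<le> y} = {y\<in>Z. a < y}" by (auto simp: le_less)
  with \<open>card Z = _\<close> show "int (card {y\<in>Z. a < y}) = int (card Z) - int (card {y\<in>Z. y < a})" by simp
qed

lemma K:
  assumes X: "X \<subseteq> {1..n}" "X \<noteq> {}" and X': "X' \<subseteq> {1..n}" "X' \<noteq> {}"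
    and dis: "X \<inter> X' = {}" and cd: "card X' = card X"
  shows "(\<forall>t. enum n X t < enum n X' (t + u)) \<longleftrightarrow> int (lch_aux (sorted_list_of_set X) X') \<le> u"
proof -
  have fin: "finite X" by (rule finite_subset[OF X(1)]) simp
  have fin': "finite X'" by (rule finite_subset[OF X'(1)]) simp
  have L': "int (lch_aux (sorted_list_of_set X) X') \<le> u \<longleftrightarrow> 0 \<le> u \<and>
     (\<forall>a\<in>X. int (card {x\<in>X. a \<le> x}) - int (card {y\<in>X'. a < y}) \<le> u)"
    using L[of "sorted_list_of_set X" X' u] fin fin' dis cd by simp
  have T: "\<And>a. a \<in> X \<Longrightarrow> int (card {x\<in>X. a \<le> x}) - int (card {y\<in>X'. a < y})
       = int (card {y\<in>X'. y < a}) - int (card {y\<in>X. y < a})"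
  proof -
    fix a assume "a \<in> X"
    then have "a \<notin> X'" using dis by auto
    then show "?thesis a" using cardsplit[OF fin, of a] cardsplit(2)[OF fin' \<open>a \<notin> X'\<close>] cd by simp
  qed
  have mn: "Min X \<in> X" "{y\<in>X. y < Min X} = {}" using fin X(2) by auto
  have "(\<forall>a\<in>X. int (card {y\<in>X'. y < a}) - int (card {y\<in>X. y < a}) \<le> u) \<Longrightarrow> 0 \<le> u"
  proof -
    assume "\<forall>a\<in>X. int (card {y\<in>X'. y < a}) - int (card {y\<in>X. y < a}) \<le> u"
    then have "int (card {y\<in>X'. y < Min X}) - int (card {y\<in>X. y < Min X}) \<le> u" using mn by blast
    then show "0 \<le> u" using mn by simp
  qed
  then show ?thesis using K1[OF assms, of u] L' T by auto
qed



lemma shift_numbering: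
  fixes c :: "int \<Rightarrow> int \<times> int"
  assumes cm: "\<And>t. fst (c t) < fst (c (t + 1))"
    and pn: "proper_numbering (range c) Y"
  shows "\<exists>s. \<forall>t. Y t = c (t + s)"
proof -
  have fm: "\<And>a b. a < b \<Longrightarrow> fst (c a) < fst (c b)" using int_step_mono[of "\<lambda>t. fst (c t)", OF cm] by blast
  have injc: "inj c"
  proof (rule injI)
    fix a b assume "c a = c b"
    then show "a = b" using fm[of a b] fm[of b a] by (cases a b rule: linorder_cases) auto
  qed
  have bij: "bij_betw Y UNIV (range c)" and nwY: "\<And>t. nw (Y t) (Y (t + 1))"
    using pn unfolding proper_numbering_def by auto
  have injY: "inj Y" and imY: "range Y = range c" using bij unfolding bij_betw_def by auto
  define \<sigma> where "\<sigma> t = inv c (Y t)" for t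
  have cs: "\<And>t. c (\<sigma> t) = Y t"
  proof -
    fix t have "Y t \<in> range c" using imY by blast
    then show "c (\<sigma> t) = Y t" unfolding \<sigma>_def by (simp add: f_inv_into_f)
  qed
  have step: "\<And>t. \<sigma> t < \<sigma> (t + 1)"
  proof -
    fix t
    have "fst (c (\<sigma> t)) \<le> fst (c (\<sigma> (t + 1)))" using nwY[of t] cs unfolding nw_def by simp
    then have le: "\<sigma> t \<le> \<sigma> (t + 1)" using fm[of "\<sigma> (t + 1)" "\<sigma> t"] by (cases "\<sigma> (t + 1) < \<sigma> t") auto
    have "Y t \<noteq> Y (t + 1)"
    proof
      assume "Y t = Y (t + 1)"
      then have "t = t + 1" by (rule injD[OF injY])
      then show False by simp
    qed
    then have "\<sigma> t \<noteq> \<sigma> (t + 1)" using cs[of t] cs[of "t+1"] by auto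
    then show "\<sigma> t < \<sigma> (t + 1)" using le by simp
  qed
  have sm: "\<And>a b. a < b \<Longrightarrow> \<sigma> a < \<sigma> b" using int_step_mono[of \<sigma>, OF step] by blast
  have surj: "\<And>k. \<exists>w. \<sigma> w = k"
  proof -
    fix k
    have "c k \<in> range Y" using imY by blast
    then obtain w where "c k = Y w" by blast
    then have "c k = c (\<sigma> w)" using cs by simp
    then have "k = \<sigma> w" by (rule injD[OF injc])
    then show "\<exists>w. \<sigma> w = k" by auto
  qed
  have succ: "\<And>t. \<sigma> (t + 1) = \<sigma> t + 1"
  proof -
    fix t
    obtain w where w: "\<sigma> w = \<sigma> t + 1" using surj by blast
    have "\<not> w \<le> t"
    proof
      assume "w \<le> t"
      then have "\<sigma> w \<le> \<sigma> t" using sm[of w t] by (cases "w = t") auto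
      then show False using w by simp
    qed
    then have "t + 1 \<le> w" by simp
    then have "\<sigma> (t + 1) \<le> \<sigma> w" using sm[of "t + 1" w] by (cases "t + 1 = w") auto
    then show "\<sigma> (t + 1) = \<sigma> t + 1" using step[of t] w by simp
  qed
  have lin: "\<And>t. \<sigma> t = t + \<sigma> 0"
  proof -
    fix t show "\<sigma> t = t + \<sigma> 0"
    proof (induction t rule: int_induct[where k = 0])
      case base then show ?case by simp
    next
      case (step1 i) then show ?case using succ[of i] by simp
    next
      case (step2 i) then show ?case using succ[of "i - 1"] by simp
    qed
  qed
  have "\<forall>t. Y t = c (t + \<sigma> 0)" using cs lin by (metis)
  then show ?thesis by blast
qed

definition good :: "int \<Rightarrow> int set \<Rightarrow> int set \<Rightarrow> bool" where
  "good n X X' \<longleftrightarrow> X \<subseteq> {1..n} \<and> X \<noteq> {} \<and> X' \<subseteq> {1..n} \<and> X' \<noteq> {} \<and> X \<inter> X' = {} \<and> card X' = card X"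

lemma Kg:
  assumes "good n X X'"
  shows "(\<forall>t. enum n X t < enum n X' (t + u)) \<longleftrightarrow> int (lch_aux (sorted_list_of_set X) X') \<le> u"
  using K assms unfolding good_def by blast

lemma Kle:
  assumes "good n X X'"
  shows "(\<forall>t. enum n X t \<le> enum n X' (t + u)) \<longleftrightarrow> int (lch_aux (sorted_list_of_set X) X') \<le> u"
proof -
  have "\<And>t. enum n X t \<noteq> enum n X' (t + u)" using enum_disj assms unfolding good_def by blast
  then have "(\<forall>t. enum n X t \<le> enum n X' (t + u)) \<longleftrightarrow> (\<forall>t. enum n X t < enum n X' (t + u))"
    by (meson le_less)
  then show ?thesis using Kg[OF assms] by simp
qed

lemma stream_range: "stream n r A B = range (canon_numbering n r A B)"
  unfolding stream_def canon_numbering_def by auto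

lemma canon_proper:
  assumes A: "A \<subseteq> {1..n}" "A \<noteq> {}" and B: "B \<subseteq> {1..n}" "B \<noteq> {}"
  shows "proper_numbering (stream n r A B) (\<lambda>t. canon_numbering n r A B (t + s))"
proof -
  let ?c = "canon_numbering n r A B"
  have injc: "inj ?c"
  proof (rule injI)
    fix a b assume "?c a = ?c b"
    then have "enum n B a = enum n B b" unfolding canon_numbering_def by simp
    then show "a = b" using enum_mono[OF B, of a b] enum_mono[OF B, of b a]
      by (cases a b rule: linorder_cases) auto
  qed
  have "bij_betw (\<lambda>t. ?c (t + s)) UNIV (range ?c)"
  proof (rule bij_betw_imageI)
    show "inj_on (\<lambda>t. ?c (t + s)) UNIV"
    proof (rule injI)
      fix a b assume "?c (a + s) = ?c (b + s)"
      then have "a + s = b + s" by (rule injD[OF injc])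
      then show "a = b" by simp
    qed
    show "range (\<lambda>t. ?c (t + s)) = range ?c"
    proof (intro set_eqI iffI)
      fix x assume "x \<in> range ?c"
      then obtain k where "x = ?c k" by blast
      then have "x = ?c ((k - s) + s)" by simp
      then show "x \<in> range (\<lambda>t. ?c (t + s))" by (rule range_eqI)
    next
      fix x assume "x \<in> range (\<lambda>t. ?c (t + s))"
      then show "x \<in> range ?c" by auto
    qed
  qed
  moreover have "\<And>t. nw (?c (t + s)) (?c (t + 1 + s))"
  proof -
    fix t
    have "enum n B (t + s) < enum n B (t + 1 + s)" using enum_mono[OF B, of "t + s" "t + 1 + s"] by simp
    moreover have "enum n A (t + s + r) < enum n A (t + 1 + s + r)" using enum_mono[OF A, of "t + s + r" "t + 1 + s + r"] by simp
    ultimately show "nw (?c (t + s)) (?c (t + 1 + s))" unfolding nw_def canon_numbering_def by simp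
  qed
  ultimately show ?thesis unfolding proper_numbering_def stream_range by simp
qed



lemma reidx:
  fixes f g :: "int \<Rightarrow> int"
  shows "(\<forall>j. f (j + 1) \<le> g (j + s)) \<longleftrightarrow> (\<forall>t. f t \<le> g (t + (s - 1)))"
proof
  assume H: "\<forall>j. f (j + 1) \<le> g (j + s)"
  show "\<forall>t. f t \<le> g (t + (s - 1))"
  proof
    fix t show "f t \<le> g (t + (s - 1))" using H[rule_format, of "t - 1"] by (simp add: algebra_simps)
  qed
next
  assume H: "\<forall>t. f t \<le> g (t + (s - 1))"
  show "\<forall>j. f (j + 1) \<le> g (j + s)"
  proof
    fix j show "f (j + 1) \<le> g (j + s)" using H[rule_format, of "j + 1"] by (simp add: algebra_simps)
  qed
qed

lemma backward:
  assumes gA: "good n A A'" and gB: "good n B B'"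
  defines "cA \<equiv> int (lch_aux (sorted_list_of_set A) A')"
    and "cB \<equiv> int (lch_aux (sorted_list_of_set B) B')"
  shows "backward_numbering (stream n r A' B') (canon_numbering n 0 A B)
         = (\<lambda>t. canon_numbering n r A' B' (t + max cB (cA - r)))"
proof -
  let ?XS = "canon_numbering n 0 A B" and ?c = "canon_numbering n r A' B'"
  let ?T = "stream n r A' B'"
  define s0 where "s0 = max cB (cA - r)"
  have A': "A' \<subseteq> {1..n}" "A' \<noteq> {}" and B': "B' \<subseteq> {1..n}" "B' \<noteq> {}"
    using gA gB unfolding good_def by auto
  have N1: "(\<forall>t. nw (?XS t) (?c (t + s))) \<longleftrightarrow> cB \<le> s \<and> cA \<le> s + r" for s
  proof -
    have "\<And>t. nw (?XS t) (?c (t + s)) \<longleftrightarrow>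
          enum n B t \<le> enum n B' (t + s) \<and> enum n A t \<le> enum n A' (t + (s + r))"
      unfolding nw_def canon_numbering_def by (simp add: add.assoc)
    then have "(\<forall>t. nw (?XS t) (?c (t + s))) \<longleftrightarrow>
          (\<forall>t. enum n B t \<le> enum n B' (t + s)) \<and> (\<forall>t. enum n A t \<le> enum n A' (t + (s + r)))"
      by blast
    then show ?thesis using Kle[OF gA, of "s + r"] Kle[OF gB, of s] unfolding cA_def cB_def by simp
  qed
  have N2: "(\<exists>j. \<not> nw (?XS (j + 1)) (?c (j + s))) \<longleftrightarrow> \<not> (cB \<le> s - 1 \<and> cA \<le> s - 1 + r)" for s
  proof -
    have "\<And>j. nw (?XS (j + 1)) (?c (j + s)) \<longleftrightarrow>
          enum n B (j + 1) \<le> enum n B' (j + s) \<and> enum n A (j + 1) \<le> enum n A' (j + (s + r))"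
      unfolding nw_def canon_numbering_def by (simp add: add.assoc)
    then have "(\<forall>j. nw (?XS (j + 1)) (?c (j + s))) \<longleftrightarrow>
          (\<forall>j. enum n B (j + 1) \<le> enum n B' (j + s)) \<and> (\<forall>j. enum n A (j + 1) \<le> enum n A' (j + (s + r)))"
      by blast
    also have "\<dots> \<longleftrightarrow> (\<forall>t. enum n B t \<le> enum n B' (t + (s - 1))) \<and> (\<forall>t. enum n A t \<le> enum n A' (t + (s + r - 1)))"
      using reidx[of "enum n B" "enum n B'" s] reidx[of "enum n A" "enum n A'" "s + r"] by simp
    also have "\<dots> \<longleftrightarrow> cB \<le> s - 1 \<and> cA \<le> s - 1 + r"
      using Kle[OF gA, of "s + r - 1"] Kle[OF gB, of "s - 1"] unfolding cA_def cB_def by (simp add: algebra_simps)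
    finally show ?thesis by blast
  qed
  have P0: "proper_numbering ?T (\<lambda>t. ?c (t + s0)) \<and> (\<forall>t. nw (?XS t) (?c (t + s0)))
            \<and> (\<exists>j. \<not> nw (?XS (j + 1)) (?c (j + s0)))"
  proof (intro conjI)
    show "proper_numbering ?T (\<lambda>t. ?c (t + s0))" by (rule canon_proper[OF A' B'])
    have "cB \<le> s0 \<and> cA \<le> s0 + r" unfolding s0_def by linarith
    then show "\<forall>t. nw (?XS t) (?c (t + s0))" using N1[of s0] by blast
    have "\<not> (cB \<le> s0 - 1 \<and> cA \<le> s0 - 1 + r)" unfolding s0_def by linarith
    then show "\<exists>j. \<not> nw (?XS (j + 1)) (?c (j + s0))" using N2[of s0] by blast
  qed
  have uniq: "Y = (\<lambda>t. ?c (t + s0))"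
    if "proper_numbering ?T Y \<and> (\<forall>t. nw (?XS t) (Y t)) \<and> (\<exists>j. \<not> nw (?XS (j + 1)) (Y j))" for Y
  proof -
    have "\<And>t. fst (?c t) < fst (?c (t + 1))" unfolding canon_numbering_def using enum_mono[OF B'] by simp
    moreover have "proper_numbering ?T Y" using that by blast
    then have "proper_numbering (range ?c) Y" by (simp only: stream_range)
    ultimately obtain s where s: "\<forall>t. Y t = ?c (t + s)"
      using shift_numbering[of ?c Y] by blast
    then have Ys: "Y = (\<lambda>t. ?c (t + s))" by auto
    have h1: "\<forall>t. nw (?XS t) (?c (t + s))" using that unfolding Ys by blast
    have h2: "\<exists>j. \<not> nw (?XS (j + 1)) (?c (j + s))" using that unfolding Ys by blast
    have "cB \<le> s \<and> cA \<le> s + r" using h1 N1[of s] by blast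
    moreover have "\<not> (cB \<le> s - 1 \<and> cA \<le> s - 1 + r)" using h2 N2[of s] by blast
    ultimately have "s = s0" unfolding s0_def by linarith
    then show ?thesis using Ys by simp
  qed
  show ?thesis unfolding backward_numbering_def s0_def[symmetric]
  proof (rule the_equality)
    show "proper_numbering ?T (\<lambda>t. ?c (t + s0)) \<and> (\<forall>t. nw (?XS t) (?c (t + s0)))
            \<and> (\<exists>j. \<not> nw (?XS (j + 1)) (?c (j + s0)))" by (rule P0)
  next
    fix Y assume "proper_numbering ?T Y \<and> (\<forall>t. nw (?XS t) (Y t)) \<and> (\<exists>j. \<not> nw (?XS (j + 1)) (Y j))"
    then show "Y = (\<lambda>t. ?c (t + s0))" by (rule uniq)
  qed
qed

lemma concurrent_iff:
  assumes gA: "good n A A'" and gB: "good n B B'"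
  defines "cA \<equiv> int (lch_aux (sorted_list_of_set A) A')"
    and "cB \<equiv> int (lch_aux (sorted_list_of_set B) B')"
  shows "concurrent (stream n r A' B') (stream n 0 A B) (canon_numbering n 0 A B) \<longleftrightarrow> r = cA - cB"
proof -
  have A: "A \<subseteq> {1..n}" "A \<noteq> {}" and B: "B \<subseteq> {1..n}" "B \<noteq> {}"
   and A': "A' \<subseteq> {1..n}" "A' \<noteq> {}" and B': "B' \<subseteq> {1..n}" "B' \<noteq> {}"
   and dA: "A \<inter> A' = {}" and dB: "B \<inter> B' = {}"
    using gA gB unfolding good_def by auto
  define s0 where "s0 = max cB (cA - r)"
  have pr: "proper_numbering (stream n 0 A B) (canon_numbering n 0 A B)"
    using canon_proper[OF A B, of 0 0] by simp
  have dj: "\<forall>c\<in>stream n 0 A B. \<forall>d\<in>stream n r A' B'. fst c \<noteq> fst d \<and> snd c \<noteq> snd d"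
    unfolding stream_def using enum_disj[OF A A' dA] enum_disj[OF B B' dB] by auto
  have bw: "backward_numbering (stream n r A' B') (canon_numbering n 0 A B) = (\<lambda>t. canon_numbering n r A' B' (t + s0))"
    using backward[OF gA gB, of r] unfolding s0_def cA_def cB_def by simp
  have C1: "(\<exists>t. enum n B' (t + s0) < enum n B (t + 1)) \<longleftrightarrow> \<not> cB \<le> s0 - 1"
  proof -
    have ne: "\<And>t. enum n B (t + 1) \<noteq> enum n B' (t + s0)" using enum_disj[OF B B' dB] by blast
    have "(\<exists>t. enum n B' (t + s0) < enum n B (t + 1)) \<longleftrightarrow> \<not> (\<forall>t. enum n B (t + 1) \<le> enum n B' (t + s0))"
      by (auto simp: not_le)
    also have "\<dots> \<longleftrightarrow> \<not> (\<forall>t. enum n B t \<le> enum n B' (t + (s0 - 1)))" using reidx by blast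
    also have "\<dots> \<longleftrightarrow> \<not> cB \<le> s0 - 1" using Kle[OF gB] unfolding cB_def by blast
    finally show ?thesis .
  qed
  have C2: "(\<exists>t. enum n A' (t + s0 + r) < enum n A (t + 1)) \<longleftrightarrow> \<not> cA \<le> s0 - 1 + r"
  proof -
    have "(\<exists>t. enum n A' (t + s0 + r) < enum n A (t + 1)) \<longleftrightarrow> \<not> (\<forall>t. enum n A (t + 1) \<le> enum n A' (t + (s0 + r)))"
      by (auto simp: not_le add.assoc)
    also have "\<dots> \<longleftrightarrow> \<not> (\<forall>t. enum n A t \<le> enum n A' (t + (s0 + r - 1)))" using reidx by blast
    also have "\<dots> \<longleftrightarrow> \<not> cA \<le> s0 + r - 1" using Kle[OF gA, of "s0 + r - 1"] unfolding cA_def by blast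
    also have "\<dots> \<longleftrightarrow> \<not> cA \<le> s0 - 1 + r" by (simp add: algebra_simps)
    finally show ?thesis .
  qed
  have "concurrent (stream n r A' B') (stream n 0 A B) (canon_numbering n 0 A B) \<longleftrightarrow>
        (\<exists>t. enum n B' (t + s0) < enum n B (t + 1)) \<and> (\<exists>t. enum n A' (t + s0 + r) < enum n A (t + 1))"
    unfolding concurrent_def bw Let_def using pr dj by (simp add: canon_numbering_def)
  also have "\<dots> \<longleftrightarrow> (\<not> cB \<le> s0 - 1) \<and> (\<not> cA \<le> s0 - 1 + r)" by (simp only: C1 C2)
  also have "\<dots> \<longleftrightarrow> r = cA - cB" unfolding s0_def by arith
  finally show ?thesis .
qed

lemma dom_const_eq:
  assumes gA: "good n (row P i) (row P (i + 1))" and gB: "good n (row Q i) (row Q (i + 1))"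
  shows "dom_const n P Q i = int (lch P i) - int (lch Q i)"
  unfolding dom_const_def lch_def
  by (rule the_equality) (use concurrent_iff[OF gA gB] in auto)



lemma good_rows:
  assumes "is_partition lam" and T: "tabloid n lam T"
    and "1 \<le> i" and "i < length lam"
    and "part lam i = part lam (i + 1)"
  shows "good n (row T i) (row T (i + 1))"
proof -
  have i1: "i \<in> {1..length lam}" "i + 1 \<in> {1..length lam}" using assms by auto
  have sub: "row T i \<subseteq> {1..n}" "row T (i + 1) \<subseteq> {1..n}"
    and cd: "card (row T i) = part lam i" "card (row T (i + 1)) = part lam (i + 1)"
    using T i1 unfolding tabloid_def by blast+
  have dis: "row T i \<inter> row T (i + 1) = {}" using T i1 unfolding tabloid_def by fastforce
  have "lam ! (i - 1) \<in> set lam" using assms by simp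
  then have pos: "0 < part lam i" using assms(1) unfolding is_partition_def part_def by blast
  have ne: "row T i \<noteq> {}" "row T (i + 1) \<noteq> {}" using cd pos assms(5) by auto
  show ?thesis unfolding good_def using sub ne dis cd assms(5) by simp
qed

theorem theorem5p10:
  fixes n :: int and lam :: "nat list" and P Q :: "int set list" and i :: nat
  assumes "1 \<le> n"
    and "is_partition lam"
    and "tabloid n lam P" and "tabloid n lam Q"
    and "1 \<le> i" and "i < length lam"
    and "part lam i = part lam (i + 1)"
  shows "dom_const n P Q i = int (lch P i) - int (lch Q i)"
  by (rule dom_const_eq) (use good_rows assms in blast)+

end
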